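(* Let $E=E_+-E_-$ be a virtual complex, where $E_\pm$ are positive admissible complexes of Hilbert spaces, and assume $E$ is pseudofinite with $\det'(\Delta\,|\,E)=1$. Then the twist $E'$ is a pseudofinite virtual complex and $$\det{}'(\Delta\,|\,E')=\tau_1(E)^{-1}.$$
   Context: A positive complex of Hilbert spaces is $E_0\to E_1\to\cdots$ (zero in negative degrees); it is admissible if every Laplacian $\Delta_p=dd^*+d^*d|_{E_p}$ is admissible (restricted off its kernel): some negative power is trace class and its zeta function $\operatorname{tr}\Delta_p'^{-s}$ continues to a function holomorphic at $0$; $\det'(\Delta_p)=\exp(-\zeta'(0))$. For a virtual complex $E=E_+-E_-$ put $\det'(\Delta|E_k)=\det'(\Delta|(E_+)_k)/\det'(\Delta|(E_-)_k)$. $E$ is pseudofinite if there is $k_0$ with $\det'(\Delta|E_k)=1$ for all $k\ge k_0$; then $\det'(\Delta|E)=\prod_{k\ge0}\det'(\Delta|E_k)^{(-1)^k}$. The torsion is $\tau_1(E)=\prod_{p\ge0}\det'(\Delta|E_p)^{p(-1)^p}$. The twist is the virtual complex $E'=\sum_{k\ge0}(-1)^kE[-k]$, where $E[j]_k=E_{k+j}$; thus its degree-$j$ component is the virtual space $\sum_{k=0}^j(-1)^kE_{j-k}$ (with the direct-sum Laplacians), so $\det'(\Delta|E'_j)=\prod_{k=0}^{j}\det'(\Delta|E_{j-k})^{(-1)^k}$. *)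

theory Defs
  imports Complex_Main
begin

text \<open>
  Abstraction: a positive admissible complex of Hilbert spaces E enters this
  statement only through the sequence of zeta-regularized determinants
  det'(Delta_p), p = 0,1,2,..., of its Laplacians, which are positive reals.
  We therefore represent E by this sequence  D :: nat => real  (with D p > 0).
  A virtual complex E = E_plus - E_minus is represented by the pair of
  sequences, and its degree-wise determinant is the quotient.
\<close>

definition vdet :: "(nat \<Rightarrow> real) \<Rightarrow> (nat \<Rightarrow> real) \<Rightarrow> nat \<Rightarrow> real" where
  "vdet Dp Dm k = Dp k / Dm k"

definition pseudofinite :: "(nat \<Rightarrow> real) \<Rightarrow> bool" where
  "pseudofinite D \<longleftrightarrow> (\<exists>k0. \<forall>k\<ge>k0. D k = 1)"

definition eprod :: "(nat \<Rightarrow> real) \<Rightarrow> real" where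
  "eprod f = (\<Prod>k < (LEAST n. \<forall>k\<ge>n. f k = 1). f k)"

definition det_total :: "(nat \<Rightarrow> real) \<Rightarrow> real" where
  "det_total D = eprod (\<lambda>k. D k powi ((-1::int) ^ k))"

definition torsion1 :: "(nat \<Rightarrow> real) \<Rightarrow> real" where
  "torsion1 D = eprod (\<lambda>p. D p powi (int p * (-1::int) ^ p))"

definition twist :: "(nat \<Rightarrow> real) \<Rightarrow> nat \<Rightarrow> real" where
  "twist D j = (\<Prod>k\<le>j. D (j - k) powi ((-1::int) ^ k))"

end

theory Submission
  imports Defs
begin

lemma powi_sgn: "(x::real) powi ((-1::int) ^ k) = (if even k then x else inverse x)"
  by (cases "even k") (auto simp: power_int_minus)

lemma eprod_eq:
  assumes "\<forall>k\<ge>n. f k = 1"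
  shows "eprod f = (\<Prod>k<n. f k)"
proof -
  define m where "m = (LEAST n. \<forall>k\<ge>n. f k = 1)"
  have m1: "\<forall>k\<ge>m. f k = 1" unfolding m_def by (rule LeastI[of _ n]) (rule assms)
  have mn: "m \<le> n" unfolding m_def by (rule Least_le) (rule assms)
  have "{..<n} = {..<m} \<union> {m..<n}" using mn by auto
  then have "(\<Prod>k<n. f k) = (\<Prod>k<m. f k) * (\<Prod>k\<in>{m..<n}. f k)"
    by (simp add: prod.union_disjoint ivl_disj_int)
  also have "(\<Prod>k\<in>{m..<n}. f k) = 1" using m1 by (auto intro: prod.neutral)
  finally show ?thesis unfolding eprod_def m_def[symmetric] by simp
qed

lemma twist_0: "twist d 0 = d 0"
  by (simp add: twist_def)

lemma twist_Suc:
  assumes "\<forall>k. d k > 0"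
  shows "twist d (Suc j) = d (Suc j) * inverse (twist d j)"
proof -
  have "twist d (Suc j) = d (Suc j) powi ((-1::int)^0) *
      (\<Prod>k\<le>j. d (Suc j - Suc k) powi ((-1::int) ^ Suc k))"
    unfolding twist_def by (simp only: prod.atMost_Suc_shift diff_Suc_Suc diff_zero)
  also have "(\<Prod>k\<le>j. d (Suc j - Suc k) powi ((-1::int) ^ Suc k))
      = (\<Prod>k\<le>j. inverse (d (j - k) powi ((-1::int) ^ k)))"
    by (rule prod.cong) (auto simp: powi_sgn)
  also have "\<dots> = inverse (twist d j)"
    unfolding twist_def using prod_inversef[of "\<lambda>k. d (j - k) powi ((-1::int) ^ k)" "{..j}"] by (simp add: o_def)
  finally show ?thesis by simp
qed

lemma twist_P:
  assumes "\<forall>k. d k > 0"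
  shows "twist d j = (if even j then (\<Prod>i<Suc j. d i powi ((-1::int)^i))
     else inverse (\<Prod>i<Suc j. d i powi ((-1::int)^i)))"
proof (induction j)
  case 0
  then show ?case by (simp add: twist_0)
next
  case (Suc j)
  have e: "(\<Prod>i<Suc (Suc j). d i powi ((-1::int)^i)) =
      (\<Prod>i<Suc j. d i powi ((-1::int)^i)) * d (Suc j) powi ((-1::int)^(Suc j))"
    by (rule prod.lessThan_Suc)
  define P where "P = (\<Prod>i<Suc j. d i powi ((-1::int)^i))"
  define x where "x = d (Suc j)"
  have ts: "twist d (Suc j) = x * inverse (twist d j)" using twist_Suc[OF assms, of j] x_def by simp
  have e': "(\<Prod>i<Suc (Suc j). d i powi ((-1::int)^i)) = P * (if even (Suc j) then x else inverse x)"
    using e unfolding P_def x_def by (simp only: powi_sgn)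
  have IH: "twist d j = (if even j then P else inverse P)" using Suc.IH unfolding P_def .
  show ?case
  proof (cases "even j")
    case True
    then have "twist d j = P" "odd (Suc j)" using IH by auto
    then show ?thesis using ts e' by (simp add: inverse_mult_distrib mult.commute)
  next
    case False
    then have "twist d j = inverse P" "even (Suc j)" using IH by auto
    then show ?thesis using ts e' by (simp add: mult.commute)
  qed
qed

lemma key_identity:
  fixes a :: "nat \<Rightarrow> real"
  shows "(\<Prod>j<M. (\<Prod>i<Suc j. a i)) * (\<Prod>p<M. a p ^ p) = (\<Prod>i<M. a i) ^ M"
proof (induction M)
  case 0
  then show ?case by simp
next
  case (Suc M)
  define Q where "Q = (\<Prod>i<M. a i)"
  have e1: "(\<Prod>j<Suc M. (\<Prod>i<Suc j. a i)) = (\<Prod>j<M. (\<Prod>i<Suc j. a i)) * (Q * a M)"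
    unfolding Q_def by (simp only: prod.lessThan_Suc[of "\<lambda>j. (\<Prod>i<Suc j. a i)"] prod.lessThan_Suc[of a M])
  have e2: "(\<Prod>p<Suc M. a p ^ p) = (\<Prod>p<M. a p ^ p) * a M ^ M"
    by (rule prod.lessThan_Suc)
  have e3: "(\<Prod>i<Suc M. a i) = Q * a M" unfolding Q_def by (rule prod.lessThan_Suc)
  have IH: "(\<Prod>j<M. (\<Prod>i<Suc j. a i)) * (\<Prod>p<M. a p ^ p) = Q ^ M"
    using Suc.IH unfolding Q_def .
  have "(\<Prod>j<Suc M. (\<Prod>i<Suc j. a i)) * (\<Prod>p<Suc M. a p ^ p)
     = ((\<Prod>j<M. (\<Prod>i<Suc j. a i)) * (\<Prod>p<M. a p ^ p)) * (Q * a M) * a M ^ M"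
    unfolding e1 e2 by (simp only: ac_simps)
  also have "\<dots> = Q ^ M * (Q * a M) * a M ^ M"
    unfolding IH ..
  also have "\<dots> = (Q * a M) ^ Suc M"
    by (simp add: power_mult_distrib ac_simps)
  finally show ?case unfolding e3 .
qed

theorem proposition2p2p1:
  fixes Dp Dm :: "nat \<Rightarrow> real"
  assumes "\<forall>k. Dp k > 0" and "\<forall>k. Dm k > 0"
    and "pseudofinite (vdet Dp Dm)"
    and "det_total (vdet Dp Dm) = 1"
  shows "pseudofinite (twist (vdet Dp Dm))
    \<and> det_total (twist (vdet Dp Dm)) = inverse (torsion1 (vdet Dp Dm))"
proof -
  define d where "d = vdet Dp Dm"
  have dpos: "\<forall>k. d k > 0" using assms(1,2) by (simp add: d_def vdet_def)
  obtain k0 where k0: "\<forall>k\<ge>k0. d k = 1" using assms(3) unfolding d_def pseudofinite_def by blast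
  define a where "a i = d i powi ((-1::int)^i)" for i
  have a1: "\<forall>k\<ge>k0. a k = 1" using k0 by (simp add: a_def)
  have Q: "(\<Prod>i<k0. a i) = 1"
    using assms(4) eprod_eq[OF a1] unfolding d_def[symmetric] det_total_def a_def by simp
  have P1: "(\<Prod>i<Suc j. a i) = 1" if "j \<ge> k0" for j
  proof -
    have "\<forall>k\<ge>Suc j. a k = 1" using a1 that by auto
    then have "eprod a = (\<Prod>i<Suc j. a i)" by (rule eprod_eq)
    with eprod_eq[OF a1] Q show ?thesis by simp
  qed
  have T: "twist d j = (if even j then (\<Prod>i<Suc j. a i) else inverse (\<Prod>i<Suc j. a i))" for j
    using twist_P[OF dpos, of j] by (simp add: a_def)
  have T1: "\<forall>j\<ge>k0. twist d j = 1" using T P1 by simp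
  have "det_total (twist d) = (\<Prod>j<k0. twist d j powi ((-1::int)^j))"
    unfolding det_total_def by (rule eprod_eq) (use T1 in simp)
  also have "\<dots> = (\<Prod>j<k0. (\<Prod>i<Suc j. a i))"
    by (rule prod.cong) (auto simp: T powi_sgn)
  finally have DT: "det_total (twist d) = (\<Prod>j<k0. (\<Prod>i<Suc j. a i))" .
  have a2: "\<forall>k\<ge>k0. d k powi (int k * (-1::int)^k) = 1" using k0 by simp
  have "torsion1 d = (\<Prod>p<k0. d p powi (int p * (-1::int)^p))"
    unfolding torsion1_def by (rule eprod_eq[OF a2])
  also have "\<dots> = (\<Prod>p<k0. a p ^ p)"
    by (rule prod.cong) (auto simp: a_def power_int_mult[of _ "(-1::int)^_" "int _", simplified mult.commute])
  finally have TO: "torsion1 d = (\<Prod>p<k0. a p ^ p)" .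
  have "det_total (twist d) * torsion1 d = 1"
    using key_identity[where M=k0 and a=a] Q DT TO by simp
  then have "det_total (twist d) = inverse (torsion1 d)"
    by (metis inverse_unique mult.commute)
  moreover have "pseudofinite (twist d)" unfolding pseudofinite_def using T1 by blast
  ultimately show ?thesis by (simp add: d_def)
qed

end
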